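(* If $f:\mathbb{R}\to\mathbb{R}_{>0}$ is very rapidly decreasing and $g:\mathbb{R}\to\mathbb{R}_{>0}$ is a positive, bounded, continuous function, then $fg$ is very rapidly decreasing.
   Context: A positive function $f:\mathbb{R}\to\mathbb{R}_{>0}$ is called very rapidly decreasing (VRD) if every smooth compactly supported function $h:\mathbb{R}\to\mathbb{R}$ is a uniform limit on $\mathbb{R}$ of functions of the form $f(x)P(x)$ with $P$ a real polynomial. *)

theory Defs
  imports "HOL-Analysis.Analysis" "HOL-Computational_Algebra.Polynomial"
begin

definition smooth_real :: "(real \<Rightarrow> real) \<Rightarrow> bool" where
  "smooth_real h \<longleftrightarrow> (\<forall>n x. ((deriv ^^ n) h) differentiable (at x))"

definition compact_support :: "(real \<Rightarrow> real) \<Rightarrow> bool" where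
  "compact_support h \<longleftrightarrow> compact (closure {x. h x \<noteq> 0})"

definition VRD :: "(real \<Rightarrow> real) \<Rightarrow> bool" where
  "VRD f \<longleftrightarrow> (\<forall>x. f x > 0) \<and>
     (\<forall>h. smooth_real h \<and> compact_support h \<longrightarrow>
        (\<forall>e>0. \<exists>P :: real poly. \<forall>x. \<bar>h x - f x * poly P x\<bar> < e))"

end

theory Submission
  imports Defs
begin

lemma rdiff_fdiff: "(F::real\<Rightarrow>real) differentiable at x \<Longrightarrow> F field_differentiable at x"
  using DERIV_deriv_iff_real_differentiable field_differentiable_def by blast

lemma smooth_iff: "smooth_real F \<longleftrightarrow> (\<forall>x. F differentiable at x) \<and> smooth_real (deriv F)"
proof
  assume A: "smooth_real F"
  have "(deriv ^^ n) (deriv F) differentiable at x" for n x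
    using A[unfolded smooth_real_def, rule_format, of "Suc n" x]
    by (simp only: funpow_Suc_right comp_def)
  then show "(\<forall>x. F differentiable at x) \<and> smooth_real (deriv F)"
    using A[unfolded smooth_real_def, rule_format, of 0] by (simp add: smooth_real_def)
next
  assume A: "(\<forall>x. F differentiable at x) \<and> smooth_real (deriv F)"
  show "smooth_real F" unfolding smooth_real_def
  proof (intro allI)
    fix n x show "(deriv ^^ n) F differentiable at x"
    proof (cases n)
      case 0 then show ?thesis using A by simp
    next
      case (Suc m) then show ?thesis using A unfolding smooth_real_def
        by (simp only: funpow_Suc_right comp_def)
    qed
  qed
qed

lemma deriv_funpow_add:
  fixes A B :: "real \<Rightarrow> real"
  shows
  "(\<forall>k<n. \<forall>x. (deriv ^^ k) A differentiable at x \<and> (deriv ^^ k) B differentiable at x) \<Longrightarrow>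
    (deriv ^^ n) (\<lambda>x. A x + B x) = (\<lambda>x. (deriv ^^ n) A x + (deriv ^^ n) B x)"
proof (induction n)
  case 0 then show ?case by simp
next
  case (Suc n)
  then have IH: "(deriv ^^ n) (\<lambda>x. A x + B x) = (\<lambda>x. (deriv ^^ n) A x + (deriv ^^ n) B x)" by auto
  show ?case
  proof
    fix x
    have "(deriv ^^ Suc n) (\<lambda>x. A x + B x) x = deriv (\<lambda>x. (deriv ^^ n) A x + (deriv ^^ n) B x) x"
      using IH by simp
    also have "\<dots> = deriv ((deriv ^^ n) A) x + deriv ((deriv ^^ n) B) x"
    proof (rule deriv_add)
      have "\<forall>x. (deriv ^^ n) A differentiable at x \<and> (deriv ^^ n) B differentiable at x"
        using Suc.prems by blast
      then show "(deriv ^^ n) A field_differentiable at x"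
        using rdiff_fdiff by blast
      show "(deriv ^^ n) B field_differentiable at x"
        using \<open>\<forall>x. _ \<and> _\<close> rdiff_fdiff by blast
    qed
    finally show "(deriv ^^ Suc n) (\<lambda>x. A x + B x) x = (deriv ^^ Suc n) A x + (deriv ^^ Suc n) B x"
      by simp
  qed
qed

lemma poly_differentiable: "poly Q differentiable at (x::real)"
  using poly_DERIV real_differentiable_def by blast

lemma deriv_prod_poly:
  assumes "h differentiable at (x::real)"
  shows "deriv (\<lambda>x. h x * poly Q x) x = deriv h x * poly Q x + h x * poly (pderiv Q) x"
proof -
  have "(h has_field_derivative deriv h x) (at x)"
    using assms DERIV_deriv_iff_real_differentiable by blast
  from DERIV_mult[OF this poly_DERIV[of Q x]] show ?thesis
    by (intro DERIV_imp_deriv) (simp add: algebra_simps)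
qed

lemma smooth_mult_poly_aux:
  "\<forall>h Q. smooth_real h \<longrightarrow> (\<forall>m\<le>n. \<forall>x. (deriv ^^ m) (\<lambda>x. h x * poly Q x) differentiable at x)"
proof (induction n)
  case 0
  show ?case
  proof (intro allI impI)
    fix h Q m x assume sh: "smooth_real h" and "m \<le> (0::nat)"
    then show "(deriv ^^ m) (\<lambda>x. h x * poly Q x) differentiable at x"
      using smooth_iff[THEN iffD1, OF sh] poly_differentiable differentiable_mult by simp
  qed
next
  case (Suc n)
  show ?case
  proof (intro allI impI)
    fix h Q m x assume sh: "smooth_real h" and m: "m \<le> Suc n"
    have hd: "\<forall>x. h differentiable at x" and sdh: "smooth_real (deriv h)"
      using smooth_iff[THEN iffD1, OF sh] by auto
    show "(deriv ^^ m) (\<lambda>x. h x * poly Q x) differentiable at x"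
    proof (cases m)
      case 0 then show ?thesis using hd poly_differentiable differentiable_mult by auto
    next
      case (Suc m')
      then have m': "m' \<le> n" using m by simp
      have IH1: "\<forall>m\<le>n. \<forall>x. (deriv ^^ m) (\<lambda>x. deriv h x * poly Q x) differentiable at x"
        using Suc.IH sdh by blast
      have IH2: "\<forall>m\<le>n. \<forall>x. (deriv ^^ m) (\<lambda>x. h x * poly (pderiv Q) x) differentiable at x"
        using Suc.IH sh by blast
      have d: "deriv (\<lambda>x. h x * poly Q x) = (\<lambda>x. deriv h x * poly Q x + h x * poly (pderiv Q) x)"
        using deriv_prod_poly hd by blast
      have e: "(deriv ^^ m') (\<lambda>x. deriv h x * poly Q x + h x * poly (pderiv Q) x)
         = (\<lambda>x. (deriv ^^ m') (\<lambda>x. deriv h x * poly Q x) x + (deriv ^^ m') (\<lambda>x. h x * poly (pderiv Q) x) x)"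
        by (rule deriv_funpow_add) (use IH1 IH2 m' in auto)
      have "(deriv ^^ m) (\<lambda>x. h x * poly Q x) = (deriv ^^ m') (\<lambda>x. deriv h x * poly Q x + h x * poly (pderiv Q) x)"
        using Suc d by (simp only: funpow_Suc_right comp_def)
      also have "\<dots> = (\<lambda>x. (deriv ^^ m') (\<lambda>x. deriv h x * poly Q x) x + (deriv ^^ m') (\<lambda>x. h x * poly (pderiv Q) x) x)"
        by (rule e)
      finally show ?thesis
        using IH1 IH2 m' by (auto intro!: differentiable_add)
    qed
  qed
qed

lemma smooth_mult_poly: "smooth_real h \<Longrightarrow> smooth_real (\<lambda>x. h x * poly Q x)"
  using smooth_mult_poly_aux unfolding smooth_real_def by blast

lemma rpf_poly: "real_polynomial_function (p :: real \<Rightarrow> real) \<Longrightarrow> \<exists>Q. \<forall>x. p x = poly Q x"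
proof (induction p rule: real_polynomial_function.induct)
  case (linear f)
  then obtain c where "f = (\<lambda>x. x * c)" using real_bounded_linear by blast
  then show ?case by (intro exI[of _ "[:0, c:]"]) simp
next
  case (const c) then show ?case by (intro exI[of _ "[:c:]"]) simp
next
  case (add f g) then obtain A B where "\<forall>x. f x = poly A x" "\<forall>x. g x = poly B x" by blast
  then show ?case by (intro exI[of _ "A + B"]) simp
next
  case (mult f g) then obtain A B where "\<forall>x. f x = poly A x" "\<forall>x. g x = poly B x" by blast
  then show ?case by (intro exI[of _ "A * B"]) simp
qed

theorem mainTheorem7:
  fixes f g :: "real \<Rightarrow> real"
  assumes "VRD f"
    and "\<forall>x. g x > 0"
    and "bounded (range g)"
    and "continuous_on UNIV g"
  shows "VRD (\<lambda>x. f x * g x)"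
proof -
  have fpos: "\<forall>x. f x > 0" and fapp: "\<And>h e. smooth_real h \<Longrightarrow> compact_support h \<Longrightarrow> e > 0 \<Longrightarrow>
        \<exists>P :: real poly. \<forall>x. \<bar>h x - f x * poly P x\<bar> < e"
    using assms(1) unfolding VRD_def by auto
  obtain M0 where M0: "\<forall>x. norm (g x) \<le> M0" using assms(3) unfolding bounded_iff by auto
  define M where "M = max M0 1"
  have Mpos: "M > 0" by (simp add: M_def)
  have gM: "g x \<le> M" for x
  proof -
    have "norm (g x) \<le> M0" using M0 by blast
    then show ?thesis by (auto simp: M_def abs_le_iff)
  qed
  show ?thesis unfolding VRD_def
  proof (intro conjI allI impI)
    fix x show "f x * g x > 0" using fpos assms(2) by simp
  next
    fix h :: "real \<Rightarrow> real" and e :: real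
    assume hyp: "smooth_real h \<and> compact_support h" and e: "e > 0"
    define K where "K = closure {x. h x \<noteq> 0}"
    have cK: "compact K" using hyp unfolding K_def compact_support_def by simp
    have hdiff: "\<forall>x. h differentiable at x" using smooth_iff[THEN iffD1] hyp by blast
    have hcont: "continuous_on UNIV h"
      using hdiff by (simp add: continuous_at_imp_continuous_on differentiable_imp_continuous_within)
    have "bounded (h ` K)"
      by (rule compact_imp_bounded[OF compact_continuous_image[OF continuous_on_subset[OF hcont subset_UNIV] cK]])
    then obtain B0 where B0: "\<forall>x\<in>K. norm (h x) \<le> B0" unfolding bounded_iff by auto
    define B where "B = max B0 1"
    have Bpos: "B > 0" using B_def by simp
    have hB: "\<bar>h x\<bar> \<le> B" if "x \<in> K" for x
    proof -
      have "norm (h x) \<le> B0" using B0 that by blast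
      then show ?thesis unfolding B_def by simp
    qed
    have hK: "h x = 0" if "x \<notin> K" for x
      using that closure_subset[of "{x. h x \<noteq> 0}"] unfolding K_def by blast
    define d where "d = e / (2 * M * B)"
    have dpos: "d > 0" using e Mpos Bpos by (simp add: d_def)
    have cinv: "continuous_on K (\<lambda>x. 1 / g x)"
      apply (auto intro!: continuous_intros continuous_on_subset[OF assms(4)])
      using assms(2) by (metis less_irrefl)
    obtain p where p: "real_polynomial_function p" "\<And>x. x \<in> K \<Longrightarrow> \<bar>1 / g x - p x\<bar> < d"
      using Stone_Weierstrass_real_polynomial_function[OF cK cinv dpos] by blast
    obtain Q where Q: "\<forall>x. p x = poly Q x" using rpf_poly[OF p(1)] by blast
    have sm: "smooth_real (\<lambda>x. h x * poly Q x)" using hyp smooth_mult_poly by blast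
    have "{x. h x * poly Q x \<noteq> 0} \<subseteq> {x. h x \<noteq> 0}" by auto
    then have "closure {x. h x * poly Q x \<noteq> 0} \<subseteq> K" unfolding K_def by (rule closure_mono)
    then have "bounded (closure {x. h x * poly Q x \<noteq> 0})"
      by (rule bounded_subset[OF compact_imp_bounded[OF cK]])
    then have "bounded {x. h x * poly Q x \<noteq> 0}"
      by (rule bounded_subset[OF _ closure_subset])
    then have cs: "compact_support (\<lambda>x. h x * poly Q x)" unfolding compact_support_def
      using compact_closure by blast
    have e2: "e / (2 * M) > 0" using e Mpos by simp
    obtain P where P: "\<forall>x. \<bar>h x * poly Q x - f x * poly P x\<bar> < e / (2 * M)"
      using fapp[OF sm cs e2] by blast
    show "\<exists>P :: real poly. \<forall>x. \<bar>h x - f x * g x * poly P x\<bar> < e"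
    proof (intro exI allI)
      fix x
      have gx: "g x > 0" using assms(2) by simp
      have t1: "\<bar>h x / g x - h x * poly Q x\<bar> \<le> e / (2 * M)"
      proof (cases "x \<in> K")
        case True
        have "h x / g x - h x * poly Q x = h x * (1 / g x - p x)"
          using Q by (simp add: right_diff_distrib)
        then have "\<bar>h x / g x - h x * poly Q x\<bar> = \<bar>h x\<bar> * \<bar>1 / g x - p x\<bar>"
          by (simp add: abs_mult)
        also have "\<dots> \<le> B * d"
          using hB[OF True] p(2)[OF True] by (intro mult_mono) auto
        also have "\<dots> = e / (2 * M)" using Bpos by (simp add: d_def)
        finally show ?thesis .
      next
        case False then show ?thesis using hK e2 by simp
      qed
      have s: "\<bar>h x / g x - f x * poly P x\<bar> < e / M"
        using t1 P[rule_format, of x] by linarith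
      have "h x - f x * g x * poly P x = g x * (h x / g x - f x * poly P x)"
        using gx by (simp add: field_simps)
      then have "\<bar>h x - f x * g x * poly P x\<bar> = g x * \<bar>h x / g x - f x * poly P x\<bar>"
        using gx by (simp add: abs_mult)
      also have "\<dots> < g x * (e / M)" by (rule mult_strict_left_mono[OF s gx])
      also have "\<dots> \<le> M * (e / M)" using gM[of x] e Mpos by (intro mult_right_mono) auto
      also have "\<dots> = e" using Mpos by simp
      finally show "\<bar>h x - f x * g x * poly P x\<bar> < e" .
    qed
  qed
qed

end
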